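(* Let $(P,\leq_1,\leq_2)$ be a finite weak plane poset. Then the relation $\ll$ on $P$ defined by $$x\ll y \iff (y\leq_1 x \text{ or } x\leq_2 y)$$ is a total order on $P$.
   Context: A double poset is a finite set $P$ equipped with two partial orders $\leq_1$ and $\leq_2$. A weak plane poset is a finite double poset $(P,\leq_1,\leq_2)$ such that: (1) for all $x,y\in P$, if $x\leq_1 y$ and $x\leq_2 y$ then $x=y$; (2) the relation $\preceq$ defined on $P$ by $x\preceq y \iff (x\leq_1 y \text{ or } x\leq_2 y)$ is a total quasi-order (i.e. reflexive, transitive, and any two elements are comparable; it need not be antisymmetric). *)

theory Defs
  imports Main
begin

definition double_poset :: "'a set \<Rightarrow> ('a \<times> 'a) set \<Rightarrow> ('a \<times> 'a) set \<Rightarrow> bool" where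
  "double_poset P le1 le2 \<longleftrightarrow> partial_order_on P le1 \<and> partial_order_on P le2"

definition weak_plane_poset :: "'a set \<Rightarrow> ('a \<times> 'a) set \<Rightarrow> ('a \<times> 'a) set \<Rightarrow> bool" where
  "weak_plane_poset P le1 le2 \<longleftrightarrow>
     double_poset P le1 le2 \<and>
     (\<forall>x\<in>P. \<forall>y\<in>P. (x, y) \<in> le1 \<and> (x, y) \<in> le2 \<longrightarrow> x = y) \<and>
     preorder_on P (le1 \<union> le2) \<and> total_on P (le1 \<union> le2)"

end

theory Submission
  imports Defs
begin

theorem mainTheorem1:
  fixes P :: "'a set" and le1 le2 :: "('a \<times> 'a) set"
  assumes "finite P" and "weak_plane_poset P le1 le2"
  shows "linear_order_on P {(x, y). (y, x) \<in> le1 \<or> (x, y) \<in> le2}"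
proof -
  have p1: "partial_order_on P le1" and p2: "partial_order_on P le2"
    and an: "\<And>x y. x\<in>P \<Longrightarrow> y\<in>P \<Longrightarrow> (x, y) \<in> le1 \<Longrightarrow> (x, y) \<in> le2 \<Longrightarrow> x = y"
    and tot: "total_on P (le1 \<union> le2)"
    using assms(2) unfolding weak_plane_poset_def double_poset_def by auto
  have s1: "le1 \<subseteq> P \<times> P" and r1: "refl_on P le1" and t1: "trans le1" and a1: "antisym le1"
    using p1 unfolding partial_order_on_def preorder_on_def by auto
  have s2: "le2 \<subseteq> P \<times> P" and r2: "refl_on P le2" and t2: "trans le2" and a2: "antisym le2"
    using p2 unfolding partial_order_on_def preorder_on_def by auto
  let ?R = "{(x, y). (y, x) \<in> le1 \<or> (x, y) \<in> le2}"
  have tr: "trans ?R"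
  proof (rule transI)
    fix x y z assume xy: "(x, y) \<in> ?R" and yz: "(y, z) \<in> ?R"
    have xP: "x \<in> P" and yP: "y \<in> P" and zP: "z \<in> P" using xy yz s1 s2 by auto
    show "(x, z) \<in> ?R"
    proof (cases "x = z")
      case True then show ?thesis using r1 xP unfolding refl_on_def by auto
    next
      case False
      then have c: "(x,z) \<in> le1 \<or> (z,x) \<in> le1 \<or> (x,z) \<in> le2 \<or> (z,x) \<in> le2"
        using tot xP zP unfolding total_on_def by auto
      have T1: "\<And>a b c. (a,b)\<in>le1 \<Longrightarrow> (b,c)\<in>le1 \<Longrightarrow> (a,c)\<in>le1" using t1 unfolding trans_def by blast
      have T2: "\<And>a b c. (a,b)\<in>le2 \<Longrightarrow> (b,c)\<in>le2 \<Longrightarrow> (a,c)\<in>le2" using t2 unfolding trans_def by blast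
      have h1: "(y, x) \<in> le1 \<or> (x, y) \<in> le2" using xy by auto
      have h2: "(z, y) \<in> le1 \<or> (y, z) \<in> le2" using yz by auto
      show ?thesis
      proof (cases "(y, x) \<in> le1")
        case A: True
        show ?thesis
        proof (cases "(z, y) \<in> le1")
          case True then show ?thesis using A T1 by blast
        next
          case False then have B: "(y, z) \<in> le2" using h2 by auto
          show ?thesis using c
          proof (elim disjE)
            assume "(x,z) \<in> le1" then have "(y,z) \<in> le1" using A T1 by blast
            then have "y = z" using an B yP zP by blast
            then show ?thesis using A by auto
          next
            assume "(z,x) \<in> le2" then have "(y,x) \<in> le2" using B T2 by blast
            then have "y = x" using an A yP xP by blast
            then show ?thesis using B by auto
          qed auto
        qed
      next
        case False then have A: "(x, y) \<in> le2" using h1 by auto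
        show ?thesis
        proof (cases "(y, z) \<in> le2")
          case True then show ?thesis using A T2 by blast
        next
          case False then have B: "(z, y) \<in> le1" using h2 by auto
          show ?thesis using c
          proof (elim disjE)
            assume "(x,z) \<in> le1" then have "(x,y) \<in> le1" using B T1 by blast
            then have "x = y" using an A yP xP by blast
            then show ?thesis using B by auto
          next
            assume "(z,x) \<in> le2" then have "(z,y) \<in> le2" using A T2 by blast
            then have "z = y" using an B yP zP by blast
            then show ?thesis using A by auto
          qed auto
        qed
      qed
    qed
  qed
  have as: "antisym ?R"
    unfolding antisym_def using an a1 a2 s1 s2 unfolding antisym_def by blast
  have sub: "?R \<subseteq> P \<times> P" using s1 s2 by auto
  have rf: "refl_on P ?R" using r2 unfolding refl_on_def by auto
  have tt: "total_on P ?R" using tot unfolding total_on_def by auto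
  show ?thesis unfolding linear_order_on_def partial_order_on_def preorder_on_def
    using tr as sub rf tt by auto
qed

end
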